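(* Let $X=L^2(0,1)$ and let $C:X\to X$ be the Cesàro operator $[Cx](s)=\frac1s\int_0^s x(t)\,dt$, $0<s\le1$. Let $u\in L^2(0,1)$ be given by $u(t)=0$ for $0\le t<1/2$ and $u(t)=1$ for $1/2\le t\le1$. Then there is a constant $K>0$ such that for all sufficiently large $R>0$ $$d(R):=\min\{\|u-Cw\|_{L^2(0,1)}:\ w\in L^2(0,1),\ \|w\|_{L^2(0,1)}\le R\}\le\frac KR.$$
   Context: $C$ is a bounded, injective, monotone, non-compact linear operator on $L^2(0,1)$. The function $u$ plays the role of $x^\dagger-\bar x$. *)

theory Defs
  imports "HOL-Analysis.Analysis"
begin

text \<open>L^2(0,1), realised as (representatives of) real functions that are Lebesgue
measurable on [0,1] and square integrable there.\<close>
definition L2_01 :: "(real \<Rightarrow> real) set" where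
  "L2_01 = {w. w \<in> borel_measurable (lebesgue_on {0..1}) \<and>
               integrable (lebesgue_on {0..1}) (\<lambda>t. (w t)^2)}"

definition L2norm :: "(real \<Rightarrow> real) \<Rightarrow> real" where
  "L2norm w = sqrt (LINT t|lebesgue_on {0..1}. (w t)^2)"

definition cesaro :: "(real \<Rightarrow> real) \<Rightarrow> real \<Rightarrow> real" where
  "cesaro x s = (1 / s) * (LINT t|lebesgue_on {0..s}. x t)"

definition u_step :: "real \<Rightarrow> real" where
  "u_step t = (if t < 1/2 then 0 else 1)"

definition dR :: "real \<Rightarrow> real" where
  "dR R = Inf {L2norm (\<lambda>t. u_step t - cesaro w t) | w. w \<in> L2_01 \<and> L2norm w \<le> R}"

end

theory Submission imports Defs begin

lemma ind_int:
  fixes A :: "real set"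
  assumes "A \<in> sets borel"
  shows "integrable (lebesgue_on {0..s}) (indicator A :: real \<Rightarrow> real)"
    and "(LINT t|lebesgue_on {0..s}. indicator A t) = measure lborel (A \<inter> {0..s})"
proof -
  have AS: "A \<inter> {0..s} \<in> sets borel" using assms by auto
  hence AL: "A \<inter> {0..s} \<in> sets lebesgue" by auto
  have sp: "space (lebesgue_on {0..s}) = {0..s}" by simp
  have "A \<inter> {0..s} \<in> sets (lebesgue_on {0..s})"
    using AL by (simp add: sets_restrict_space_iff)
  moreover have "emeasure (lebesgue_on {0..s}) (A \<inter> {0..s}) < \<infinity>"
  proof -
    have "emeasure (lebesgue_on {0..s}) (A \<inter> {0..s}) = emeasure lebesgue (A \<inter> {0..s})"
      by (simp add: emeasure_restrict_space)
    also have "\<dots> \<le> emeasure lebesgue {0..s}"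
      by (intro emeasure_mono) auto
    also have "\<dots> < \<infinity>" by (simp add: emeasure_lborel_Icc_eq)
    finally show ?thesis .
  qed
  ultimately show "integrable (lebesgue_on {0..s}) (indicator A :: real \<Rightarrow> real)"
    by (simp add: integrable_indicator_iff)
  have "(LINT t|lebesgue_on {0..s}. indicator A t) = measure (lebesgue_on {0..s}) (A \<inter> {0..s})"
    by simp
  also have "\<dots> = measure lebesgue (A \<inter> {0..s})"
    by (subst measure_restrict_space) auto
  also have "\<dots> = measure lborel (A \<inter> {0..s})"
    using AS by simp
  finally show "(LINT t|lebesgue_on {0..s}. indicator A t) = measure lborel (A \<inter> {0..s})" .
qed




lemma cesaro_w:
  fixes d :: real
  assumes d: "0 < d" "d \<le> 1/4" and s: "0 \<le> s" "s \<le> 1"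
  defines "a \<equiv> 1/2 - d" and "h \<equiv> 1/(2*d)"
  defines "w \<equiv> \<lambda>t. h * indicator {a..<1/2} t + indicator {1/2..1} t"
  shows "u_step s - cesaro w s = - (if a \<le> s \<and> s < 1/2 then h * (s - a) / s else 0)"
proof -
  have I: "(LINT t|lebesgue_on {0..s}. w t) = h * measure lborel ({a..<1/2} \<inter> {0..s}) + measure lborel ({1/2..1} \<inter> {0..s})"
  proof -
    have i1: "integrable (lebesgue_on {0..s}) (indicat_real {a..<1/2})" by (rule ind_int) auto
    have i2: "integrable (lebesgue_on {0..s}) (indicat_real {1/2..1})" by (rule ind_int) auto
    have "(LINT t|lebesgue_on {0..s}. w t) = (LINT t|lebesgue_on {0..s}. h * indicat_real {a..<1/2} t) + (LINT t|lebesgue_on {0..s}. indicat_real {1/2..1} t)"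
      unfolding w_def using i1 i2 by (subst Bochner_Integration.integral_add) auto
    also have "\<dots> = h * measure lborel ({a..<1/2} \<inter> {0..s}) + measure lborel ({1/2..1} \<inter> {0..s})"
    proof -
      have e1: "(LINT t|lebesgue_on {0..s}. indicat_real {a..<1/2} t) = measure lborel ({a..<1/2} \<inter> {0..s})" by (rule ind_int(2)) auto
      have e2: "(LINT t|lebesgue_on {0..s}. indicat_real {1/2..1} t) = measure lborel ({1/2..1} \<inter> {0..s})" by (rule ind_int(2)) auto
      show ?thesis by (simp only: integral_mult_right_zero e1 e2)
    qed
    finally show ?thesis .
  qed
  consider "s < a" | "a \<le> s" "s < 1/2" | "1/2 \<le> s" by linarith
  then show ?thesis
  proof cases
    case 1
    have "{a..<1/2} \<inter> {0..s} = {}" "{1/2..1} \<inter> {0..s} = {}" using 1 d by (auto simp: a_def)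
    then show ?thesis using 1 d by (simp add: cesaro_def I u_step_def a_def)
  next
    case 2
    have "{a..<1/2} \<inter> {0..s} = {a..s}" "{1/2..1} \<inter> {0..s} = {}" using 2 d by (auto simp: a_def)
    then show ?thesis using 2 d by (simp add: cesaro_def I u_step_def)
  next
    case 3
    have "{a..<1/2} \<inter> {0..s} = {a..<1/2}" "{1/2..1} \<inter> {0..s} = {1/2..s}" using 3 d s by (auto simp: a_def)
    moreover have "h * d = 1/2" using d by (simp add: h_def)
    ultimately show ?thesis using 3 d s by (simp add: cesaro_def I u_step_def a_def field_simps)
  qed
qed


lemma main_est:
  fixes d :: real
  assumes d: "0 < d" "d \<le> 1/4"
  defines "a \<equiv> 1/2 - d" and "h \<equiv> 1/(2*d)"
  defines "w \<equiv> \<lambda>t. h * indicator {a..<1/2} t + indicator {1/2..1} t"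
  shows "w \<in> L2_01" "L2norm w = sqrt (h^2 * d + 1/2)"
    "L2norm (\<lambda>t. u_step t - cesaro w t) \<le> sqrt (4 * d)"
proof -
  have i1: "integrable (lebesgue_on {0..1}) (indicat_real {a..<1/2})" by (rule ind_int) auto
  have i2: "integrable (lebesgue_on {0..1}) (indicat_real {1/2..(1::real)})" by (rule ind_int) auto
  have e1: "(LINT t|lebesgue_on {0..1}. indicat_real {a..<1/2} t) = measure lborel ({a..<1/2} \<inter> {0..1})" by (rule ind_int(2)) auto
  have e2: "(LINT t|lebesgue_on {0..1}. indicat_real {1/2..(1::real)} t) = measure lborel ({1/2..(1::real)} \<inter> {0..1})" by (rule ind_int(2)) auto
  have m1: "measure lborel ({a..<1/2} \<inter> {0..1}) = d"
  proof -
    have "{a..<1/2} \<inter> {0..1} = {a..<1/2}" using d by (auto simp: a_def)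
    thus ?thesis using d by (simp add: a_def)
  qed
  have m2: "measure lborel ({1/2..1} \<inter> {0..(1::real)}) = 1/2"
  proof -
    have "{1/2..1} \<inter> {0..1} = {1/2..(1::real)}" by auto
    thus ?thesis by simp
  qed
  have wsq: "(w t)^2 = h^2 * indicat_real {a..<1/2} t + indicat_real {1/2..1} t" for t
    unfolding w_def by (auto simp: indicator_def power2_eq_square a_def)
  have idm: "(\<lambda>x::real. x) \<in> borel_measurable (lebesgue_on {0..1})"
    by (intro measurable_restrict_space1 measurable_completion) simp
  note mI[measurable] = idm borel_measurable_integrable[OF i1] borel_measurable_integrable[OF i2]
  have wm: "w \<in> borel_measurable (lebesgue_on {0..1})"
    unfolding w_def by measurable
  have wi: "integrable (lebesgue_on {0..1}) (\<lambda>t. (w t)^2)"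
    unfolding wsq using i1 i2 by auto
  show "w \<in> L2_01" using wm wi by (simp add: L2_01_def)
  have "(LINT t|lebesgue_on {0..1}. (w t)^2) = h^2 * d + 1/2"
    unfolding wsq using i1 i2 by (simp only: Bochner_Integration.integral_add integrable_mult_right integral_mult_right_zero e1 e2 m1 m2)
  thus "L2norm w = sqrt (h^2 * d + 1/2)" by (simp add: L2norm_def)
  define g where "g = (\<lambda>s::real. - (if a \<le> s \<and> s < 1/2 then h * (s - a) / s else 0))"
  have eg: "\<forall>s\<in>space (lebesgue_on {0..1}). (u_step s - cesaro w s)^2 = (g s)^2"
    using cesaro_w[OF d] by (auto simp: g_def a_def h_def w_def)
  have gb: "(g s)^2 \<le> 4 * indicat_real {a..<1/2} s" for s
  proof (cases "a \<le> s \<and> s < 1/2")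
    case True
    have s0: "s \<ge> 1/4" using True d by (auto simp: a_def)
    have "0 \<le> h * (s - a) / s" using True d s0 by (auto simp: h_def)
    moreover have "h * (s - a) / s \<le> 2"
    proof -
      have "h * (s - a) \<le> h * d" using True d by (auto simp: h_def a_def intro!: mult_left_mono)
      also have "\<dots> = 1/2" using d by (simp add: h_def)
      also have "\<dots> \<le> 2 * s" using s0 by simp
      finally show ?thesis using s0 by (simp add: divide_le_eq)
    qed
    ultimately have "(h * (s - a) / s)^2 \<le> 2^2" by (intro power_mono) auto
    thus ?thesis using True by (simp add: g_def indicator_def)
  next
    case False
    then show ?thesis by (auto simp: g_def indicator_def)
  qed
  have gm: "(\<lambda>s. (g s)^2) \<in> borel_measurable (lebesgue_on {0..1})"
  proof -
    have "(\<lambda>s. (g s)^2) = (\<lambda>s. (h * (s - a) / s)^2 * indicat_real {a..<1/2} s)"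
      by (auto simp: g_def indicator_def fun_eq_iff)
    also have "\<dots> \<in> borel_measurable (lebesgue_on {0..1})" by measurable
    finally show ?thesis .
  qed
  have gi: "integrable (lebesgue_on {0..1}) (\<lambda>s. (g s)^2)"
    by (rule Bochner_Integration.integrable_bound[where f="\<lambda>s. 4 * indicat_real {a..<1/2} s"]) (use i1 gm gb in auto)
  have "(LINT s|lebesgue_on {0..1}. (u_step s - cesaro w s)^2) = (LINT s|lebesgue_on {0..1}. (g s)^2)"
    using eg by (intro Bochner_Integration.integral_cong) auto
  also have "\<dots> \<le> (LINT s|lebesgue_on {0..1}. 4 * indicat_real {a..<1/2} s)"
    by (rule Bochner_Integration.integral_mono) (use gi i1 gb in auto)
  also have "\<dots> = 4 * d" by (simp only: integral_mult_right_zero e1 m1)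
  finally show "L2norm (\<lambda>t. u_step t - cesaro w t) \<le> sqrt (4 * d)"
    by (simp add: L2norm_def)
qed


theorem proposition4p3:
  shows "\<exists>K>0. \<forall>\<^sub>F R in at_top. dR R \<le> K / R"
proof (intro exI[of _ 2] conjI)
  show "eventually (\<lambda>R. dR R \<le> 2 / R) at_top"
    unfolding eventually_at_top_linorder
  proof (intro exI[of _ 2] allI impI)
    fix R :: real assume R: "2 \<le> R"
    define d where "d = 1 / (2 * R^2)"
    have R2: "R^2 \<ge> 4" using R by (metis power2_eq_square mult_mono' numeral_Bit0 mult_2 order_trans zero_le_numeral power2_nat_le_eq_le power_mono)
    have R2p: "R^2 > 0" using R2 by linarith
    have d0: "0 < d" using R by (simp add: d_def)
    have d4: "d \<le> 1/4" using R2 R2p by (simp add: d_def field_simps)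
    define w where "w = (\<lambda>t. 1/(2*d) * indicator {1/2 - d..<1/2} t + indicator {1/2..1} t)"
    note E = main_est[OF d0 d4, folded w_def]
    have hd: "(1/(2*d))^2 * d + 1/2 \<le> R^2"
      using R2 R2p R by (simp add: d_def field_simps power2_eq_square)
    have wn: "L2norm w \<le> R"
      using E(2) hd R by (metis real_sqrt_le_mono real_sqrt_abs abs_of_nonneg order_trans zero_le_numeral le_numeral_extra(4) power2_eq_square dual_order.trans) 
    have "dR R \<le> L2norm (\<lambda>t. u_step t - cesaro w t)"
      unfolding dR_def
    proof (rule cInf_lower)
      show "L2norm (\<lambda>t. u_step t - cesaro w t) \<in> {L2norm (\<lambda>t. u_step t - cesaro w t) |w. w \<in> L2_01 \<and> L2norm w \<le> R}"
        using E(1) wn by blast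
      show "bdd_below {L2norm (\<lambda>t. u_step t - cesaro w t) |w. w \<in> L2_01 \<and> L2norm w \<le> R}"
        by (rule bdd_belowI[of _ 0]) (auto simp: L2norm_def)
    qed
    also have "\<dots> \<le> sqrt (4 * d)" by (rule E(3))
    also have "\<dots> \<le> 2 / R"
    proof -
      have "4 * d \<le> (2 / R)^2" using R R2p by (simp add: d_def field_simps power2_eq_square)
      hence "sqrt (4 * d) \<le> sqrt ((2/R)^2)" by (rule real_sqrt_le_mono)
      thus ?thesis using R by simp
    qed
    finally show "dR R \<le> 2 / R" .
  qed
qed simp

end
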